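(* In the setting of the context, suppose Condition UI holds: $\mathcal{Q}$ is uniformly integrable and each $R^i\mathcal{Q}:=\{R^iZ:Z\in\mathcal{Q}\}$, $i=1,\dots,d$, is uniformly integrable. Let $\overline{\mathcal{Q}}$ be the $L^1$-closure of $\mathcal{Q}$. Then $C_{\overline{\mathcal{Q}}}:=\{\mathbb{E}[-Z(R-r\mathbf{1})]:Z\in\overline{\mathcal{Q}}\}$ is a convex and compact subset of $\mathbb{R}^d$, and for every $\pi\in\mathbb{R}^d$, $\rho(X_\pi)=\max_{c\in C_{\overline{\mathcal{Q}}}}\pi\cdot c$.
   Context: Let $(\Omega,\mathcal{F},\mathbb{P})$ be a probability space and a market: riskless asset $S^0_0=1$, $S^0_1=1+r$, $r>-1$; risky assets $S^1,\dots,S^d$ with constants $S^i_0>0$ and real-valued $\mathcal{F}$-measurable $S^i_1$; returns $R^i:=(S^i_1-S^i_0)/S^i_0$, $R=(R^1,\dots,R^d)$. Standing assumptions: nonredundancy (if $\theta\in\mathbb{R}^{1+d}$ with $\sum_{i=0}^d\theta^iS^i_t=0$ a.s. for $t\in\{0,1\}$ then $\theta=0$), $R^i\in L^1$, $\mathbb{E}[R^i]\ne r$ for some $i$. Excess return: $X_\pi:=\pi\cdot(R-r\mathbf{1})$. $L$ is a Riesz space with $L^\infty\subset L\subset L^1$ containing all $X_\pi$. $\mathcal{D}:=\{Z\in L^1:Z\ge0,\mathbb{E}[Z]=1\}$; $\mathcal{Q}\subset\mathcal{D}$ is convex with $1\in\mathcal{Q}$ and $\rho(X)=\sup_{Z\in\mathcal{Q}}\mathbb{E}[-ZX]$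 on $L$, where $\mathbb{E}[-ZX]:=\mathbb{E}[ZX^-]-\mathbb{E}[ZX^+]$ with $\mathbb{E}[-ZX]=\infty$ if $\mathbb{E}[ZX^-]=\infty$. *)

theory Defs
  imports "HOL-Probability.Probability"
begin

definition unif_integrable :: "'a measure \<Rightarrow> ('a \<Rightarrow> real) set \<Rightarrow> bool" where
  "unif_integrable M F \<longleftrightarrow>
     F \<subseteq> borel_measurable M \<and>
     ((\<lambda>K::real. \<Squnion>f\<in>F. \<integral>\<^sup>+x. ennreal \<bar>f x\<bar> * indicator {y. K < \<bar>f y\<bar>} x \<partial>M)
        \<longlongrightarrow> 0) at_top"

definition densities :: "'a measure \<Rightarrow> ('a \<Rightarrow> real) set" where
  "densities M = {Z. integrable M Z \<and> (AE x in M. 0 \<le> Z x) \<and> integral\<^sup>L M Z = 1}"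

definition L1_closure :: "'a measure \<Rightarrow> ('a \<Rightarrow> real) set \<Rightarrow> ('a \<Rightarrow> real) set" where
  "L1_closure M Q = {Z. integrable M Z \<and>
      (\<exists>Zn. (\<forall>n. Zn n \<in> Q) \<and>
         (\<lambda>n. \<integral>\<^sup>+x. ennreal \<bar>Zn n x - Z x\<bar> \<partial>M) \<longlonglongrightarrow> 0)}"

definition neg_expect :: "'a measure \<Rightarrow> ('a \<Rightarrow> real) \<Rightarrow> ('a \<Rightarrow> real) \<Rightarrow> ereal" where
  "neg_expect M Z X =
     (let a = (\<integral>\<^sup>+x. ennreal (Z x * max 0 (- X x)) \<partial>M);
          b = (\<integral>\<^sup>+x. ennreal (Z x * max 0 (X x)) \<partial>M)
      in if a = \<infinity> then \<infinity> else enn2ereal a - enn2ereal b)"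

definition rho :: "'a measure \<Rightarrow> ('a \<Rightarrow> real) set \<Rightarrow> ('a \<Rightarrow> real) \<Rightarrow> ereal" where
  "rho M Q X = (\<Squnion>Z\<in>Q. neg_expect M Z X)"

definition excess_return :: "('d::finite \<Rightarrow> 'a \<Rightarrow> real) \<Rightarrow> real \<Rightarrow> real^'d \<Rightarrow> 'a \<Rightarrow> real" where
  "excess_return R r \<pi> = (\<lambda>x. \<Sum>i\<in>UNIV. \<pi> $ i * (R i x - r))"

definition C_set :: "'a measure \<Rightarrow> ('d::finite \<Rightarrow> 'a \<Rightarrow> real) \<Rightarrow> real \<Rightarrow> ('a \<Rightarrow> real) set \<Rightarrow> (real^'d) set" where
  "C_set M R r Q = {c. \<exists>Z\<in>Q. \<forall>i. ereal (c $ i) = neg_expect M Z (\<lambda>x. R i x - r)}"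

end

theory Submission
  imports Defs
begin

lemma sqrt_mid_ge:
  fixes g h :: real assumes "g \<ge> 0" "h \<ge> 0"
  shows "(sqrt g + sqrt h)/2 \<le> sqrt ((g+h)/2)"
proof (rule real_le_rsqrt)
  have "((sqrt g + sqrt h)/2)^2 = (g + h + 2 * sqrt g * sqrt h)/4"
    using assms by (simp add: power2_eq_square algebra_simps)
  also have "\<dots> \<le> (g+h)/2"
  proof -
    have "0 \<le> (sqrt g - sqrt h)^2" by simp
    also have "(sqrt g - sqrt h)^2 = g + h - 2 * sqrt g * sqrt h"
      using assms by (simp add: power2_eq_square algebra_simps)
    finally show ?thesis by simp
  qed
  finally show "((sqrt g + sqrt h)/2)^2 \<le> (g+h)/2" .
qed

lemma core_ineq:
  fixes u v t :: real assumes u: "u \<ge> 0" and v: "v \<ge> 0" and t: "t > 0"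
  shows "\<bar>u^2 - v^2\<bar> \<le> 3*t*(sqrt ((u^2+v^2)/2) - (u+v)/2) + (u+v)^3/(2*t)"
proof -
  define w where "w = sqrt ((u^2+v^2)/2)"
  define s where "s = u + v"
  define D where "D = w - s/2"
  have w0: "w \<ge> 0" by (simp add: w_def)
  have w2: "w^2 = (u^2+v^2)/2" unfolding w_def by (simp add: add_nonneg_nonneg)
  have s0: "s \<ge> 0" using u v by (simp add: s_def)
  have D0: "D \<ge> 0" using sqrt_mid_ge[of "u^2" "v^2"] u v by (simp add: D_def w_def s_def)
  have ws: "w \<le> s"
  proof -
    have "(u^2+v^2)/2 \<le> s^2" using u v by (simp add: s_def power2_eq_square algebra_simps)
    then have "w \<le> sqrt (s^2)" unfolding w_def by (rule real_sqrt_le_mono)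
    then show ?thesis using s0 by simp
  qed
  have key: "(u - v)^2 / 4 = D * (w + s/2)"
  proof -
    have "D * (w + s/2) = w^2 - (s/2)^2" by (simp add: D_def power2_eq_square algebra_simps)
    also have "\<dots> = (u^2+v^2)/2 - ((u+v)/2)^2" using w2 by (simp add: s_def)
    also have "\<dots> = (u - v)^2 / 4" by (simp add: power2_eq_square field_simps)
    finally show ?thesis by simp
  qed
  have "D * (w + s/2) \<le> D * (3/2 * s)" using D0 ws by (intro mult_left_mono) auto
  with key have A: "(u-v)^2 \<le> 6 * s * D" by simp
  have lhs: "\<bar>u^2 - v^2\<bar> = \<bar>u - v\<bar> * s"
  proof -
    have "u^2 - v^2 = (u - v) * s" by (simp add: s_def power2_eq_square algebra_simps)
    then have "\<bar>u^2 - v^2\<bar> = \<bar>u - v\<bar> * \<bar>s\<bar>" by (simp add: abs_mult)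
    then show ?thesis using s0 by simp
  qed
  have sq: "(\<bar>u - v\<bar> * s)^2 \<le> 6 * s^3 * D"
  proof -
    have "(\<bar>u - v\<bar> * s)^2 = (u-v)^2 * s^2" by (simp add: power_mult_distrib)
    also have "\<dots> \<le> (6 * s * D) * s^2" using A by (intro mult_right_mono) auto
    also have "\<dots> = 6 * s^3 * D" by (simp add: power2_eq_square power3_eq_cube)
    finally show ?thesis .
  qed
  have amgm: "6 * s^3 * D \<le> (3*t*D + s^3/(2*t))^2"
  proof -
    have "(3*t*D + s^3/(2*t))^2 - 6 * s^3 * D = (3*t*D - s^3/(2*t))^2"
      using t by (simp add: power2_eq_square field_simps)
    then show ?thesis by (smt (verit) zero_le_power2)
  qed
  have rhs0: "0 \<le> 3*t*D + s^3/(2*t)" using t D0 s0 by simp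
  have "\<bar>u - v\<bar> * s \<le> 3*t*D + s^3/(2*t)"
    using sq amgm rhs0 by (meson order_trans power2_le_imp_le)
  then show ?thesis using lhs by (simp add: D_def w_def s_def)
qed

lemma sqrt_ineq:
  fixes g h k t :: real assumes g: "g \<ge> 0" and h: "h \<ge> 0" and k: "k \<ge> 0" and t: "t > 0"
  shows "\<bar>g - h\<bar> \<le> 3*t*(sqrt ((g+h)/2) - (sqrt g + sqrt h)/2) + 4*k^3/t
            + 2*max 0 (g - k^2/2) + 2*max 0 (h - k^2/2)"
proof -
  define D where "D = sqrt ((g+h)/2) - (sqrt g + sqrt h)/2"
  have D0: "D \<ge> 0" using sqrt_mid_ge[OF g h] by (simp add: D_def)
  have m1: "0 \<le> max 0 (g - k^2/2)" "0 \<le> max 0 (h - k^2/2)" by auto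
  have k3: "0 \<le> 4*k^3/t" using k t by simp
  show ?thesis
  proof (cases "g \<le> k^2 \<and> h \<le> k^2")
    case True
    have "sqrt g \<le> sqrt (k^2)" "sqrt h \<le> sqrt (k^2)"
      using real_sqrt_le_mono[OF conjunct1[OF True]] real_sqrt_le_mono[OF conjunct2[OF True]] by auto
    then have su: "sqrt g \<le> k" "sqrt h \<le> k" using k by auto
    have "\<bar>g - h\<bar> = \<bar>(sqrt g)^2 - (sqrt h)^2\<bar>" using g h by simp
    also have "\<dots> \<le> 3*t*(sqrt (((sqrt g)^2+(sqrt h)^2)/2) - (sqrt g+sqrt h)/2) + (sqrt g+sqrt h)^3/(2*t)"
      by (rule core_ineq) (use t g h in auto)
    also have "\<dots> = 3*t*D + (sqrt g+sqrt h)^3/(2*t)" using g h by (simp add: D_def)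
    finally have 1: "\<bar>g - h\<bar> \<le> 3*t*D + (sqrt g+sqrt h)^3/(2*t)" .
    have "(sqrt g+sqrt h)^3/(2*t) \<le> (2*k)^3/(2*t)"
      using su t g h by (intro divide_right_mono power_mono) auto
    also have "(2*k)^3/(2*t) = 4*k^3/t" by (simp add: power3_eq_cube)
    finally have 2: "(sqrt g+sqrt h)^3/(2*t) \<le> 4*k^3/t" .
    have lin: "a \<le> x + y \<Longrightarrow> y \<le> z \<Longrightarrow> 0 \<le> c \<Longrightarrow> 0 \<le> d \<Longrightarrow> a \<le> x + z + 2*c + 2*d"
      for a x y z c d :: real by linarith
    have "\<bar>g - h\<bar> \<le> 3*t*D + 4*k^3/t + 2*max 0 (g - k^2/2) + 2*max 0 (h - k^2/2)"
      by (rule lin[OF 1 2 m1])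
    then show ?thesis by (simp only: D_def)
  next
    case False
    have "\<bar>g - h\<bar> \<le> 2*max 0 (g - k^2/2) + 2*max 0 (h - k^2/2)"
      using False g h k by (auto simp: abs_if max_def)
    moreover have tD: "0 \<le> 3*t*D" using t D0 by simp
    moreover have lin2: "a \<le> c2 + d2 \<Longrightarrow> 0 \<le> x \<Longrightarrow> 0 \<le> y \<Longrightarrow> a \<le> x + y + c2 + d2"
      for a x y c2 d2 :: real by linarith
    ultimately have "\<bar>g - h\<bar> \<le> 3*t*D + 4*k^3/t + 2*max 0 (g - k^2/2) + 2*max 0 (h - k^2/2)"
      using k3 by (intro lin2) auto
    then show ?thesis by (simp only: D_def)
  qed
qed

lemma fatou_ae:
  fixes u :: "nat \<Rightarrow> 'a \<Rightarrow> ennreal"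
  assumes "\<And>n. u n \<in> borel_measurable M"
    and "AE x in M. (\<lambda>n. u n x) \<longlonglongrightarrow> g x"
    and "\<And>n. (\<integral>\<^sup>+x. u n x \<partial>M) \<le> c"
  shows "(\<integral>\<^sup>+x. g x \<partial>M) \<le> c"
proof -
  have "(\<integral>\<^sup>+x. g x \<partial>M) = (\<integral>\<^sup>+x. liminf (\<lambda>n. u n x) \<partial>M)"
    using assms(2) by (intro nn_integral_cong_AE) (auto simp: lim_imp_Liminf)
  also have "\<dots> \<le> liminf (\<lambda>n. \<integral>\<^sup>+x. u n x \<partial>M)"
    using assms(1) by (rule nn_integral_liminf)
  also have "\<dots> \<le> c"
    using assms(3) by (intro Liminf_le) auto
  finally show ?thesis .
qed

lemma nn_abs_eq:
  fixes f :: "'a \<Rightarrow> real"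
  assumes "integrable M f"
  shows "(\<integral>\<^sup>+x. ennreal \<bar>f x\<bar> \<partial>M) = ennreal (\<integral>x. \<bar>f x\<bar> \<partial>M)"
  using assms by (subst nn_integral_eq_integral) auto

lemma L1conv:
  fixes f :: "nat \<Rightarrow> 'a \<Rightarrow> real"
  assumes "\<And>n. integrable M (f n)" "integrable M g"
  shows "((\<lambda>n. \<integral>\<^sup>+x. ennreal \<bar>f n x - g x\<bar> \<partial>M) \<longlonglongrightarrow> 0) \<longleftrightarrow>
         ((\<lambda>n. \<integral>x. \<bar>f n x - g x\<bar> \<partial>M) \<longlonglongrightarrow> 0)"
proof -
  have "(\<lambda>n. \<integral>\<^sup>+x. ennreal \<bar>f n x - g x\<bar> \<partial>M) = (\<lambda>n. ennreal (\<integral>x. \<bar>f n x - g x\<bar> \<partial>M))"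
    using assms by (intro ext nn_abs_eq) auto
  moreover have "((\<lambda>n. ennreal (\<integral>x. \<bar>f n x - g x\<bar> \<partial>M)) \<longlonglongrightarrow> ennreal 0) \<longleftrightarrow>
         ((\<lambda>n. \<integral>x. \<bar>f n x - g x\<bar> \<partial>M) \<longlonglongrightarrow> 0)"
    by (rule tendsto_ennreal_iff) auto
  ultimately show ?thesis by simp
qed

lemma L1_tendsto_int:
  fixes f :: "nat \<Rightarrow> 'a \<Rightarrow> real"
  assumes "\<And>n. integrable M (f n)" "integrable M g"
    and "(\<lambda>n. \<integral>x. \<bar>f n x - g x\<bar> \<partial>M) \<longlonglongrightarrow> 0"
  shows "(\<lambda>n. \<integral>x. f n x \<partial>M) \<longlonglongrightarrow> (\<integral>x. g x \<partial>M)"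
proof -
  have "(\<lambda>n. \<integral>\<^sup>+x. ennreal \<bar>f n x - g x\<bar> \<partial>M) \<longlonglongrightarrow> 0"
    using L1conv[OF assms(1,2)] assms(3) by simp
  then show ?thesis
    using assms by (intro tendsto_L1_int) auto
qed

lemma L1_complete:
  fixes s :: "nat \<Rightarrow> 'a \<Rightarrow> real"
  assumes int: "\<And>n. integrable M (s n)"
    and cau: "\<And>e. e > 0 \<Longrightarrow> \<exists>N. \<forall>i\<ge>N. \<forall>j\<ge>N. (\<integral>x. \<bar>s i x - s j x\<bar> \<partial>M) < e"
  shows "\<exists>f. integrable M f \<and> (\<lambda>n. \<integral>x. \<bar>s n x - f x\<bar> \<partial>M) \<longlonglongrightarrow> 0"
proof -
  have [measurable]: "\<And>n. s n \<in> borel_measurable M" using int by auto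
  obtain r where r: "strict_mono r" and ae: "AE x in M. Cauchy (\<lambda>i. s (r i) x)"
    using cauchy_L1_AE_cauchy_subseq[of M s] int cau by auto
  define f where "f x = lim (\<lambda>i. s (r i) x)" for x
  have fm[measurable]: "f \<in> borel_measurable M" unfolding f_def by measurable
  have ae2: "AE x in M. (\<lambda>i. s (r i) x) \<longlonglongrightarrow> f x"
    using ae by eventually_elim (auto simp: f_def Cauchy_convergent_iff convergent_LIMSEQ_iff)
  have bnd: "(\<integral>\<^sup>+x. ennreal \<bar>s n x - f x\<bar> \<partial>M) \<le> ennreal e"
    if e: "e > 0" and N: "\<forall>i\<ge>N. \<forall>j\<ge>N. (\<integral>x. \<bar>s i x - s j x\<bar> \<partial>M) < e" and n: "n \<ge> N" for e N n
  proof -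
    have "(\<integral>\<^sup>+x. ennreal \<bar>s n x - f x\<bar> \<partial>M) \<le> liminf (\<lambda>i. \<integral>\<^sup>+x. ennreal \<bar>s n x - s (r i) x\<bar> \<partial>M)"
    proof -
      have "(\<integral>\<^sup>+x. ennreal \<bar>s n x - f x\<bar> \<partial>M) = (\<integral>\<^sup>+x. liminf (\<lambda>i. ennreal \<bar>s n x - s (r i) x\<bar>) \<partial>M)"
        using ae2
      proof (intro nn_integral_cong_AE, eventually_elim)
        case (elim x)
        then have "(\<lambda>i. ennreal \<bar>s n x - s (r i) x\<bar>) \<longlonglongrightarrow> ennreal \<bar>s n x - f x\<bar>"
          by (intro tendsto_intros)
        then show ?case by (metis lim_imp_Liminf trivial_limit_sequentially)
      qed
      also have "\<dots> \<le> liminf (\<lambda>i. \<integral>\<^sup>+x. ennreal \<bar>s n x - s (r i) x\<bar> \<partial>M)"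
        by (rule nn_integral_liminf) measurable
      finally show ?thesis .
    qed
    also have "\<dots> \<le> ennreal e"
    proof (intro Liminf_le)
      show "\<forall>\<^sub>F i in sequentially. (\<integral>\<^sup>+x. ennreal \<bar>s n x - s (r i) x\<bar> \<partial>M) \<le> ennreal e"
        unfolding eventually_sequentially
      proof (intro exI allI impI)
        fix i assume "N \<le> i"
        then have "r i \<ge> N" using seq_suble[OF r, of i] by linarith
        then have "(\<integral>x. \<bar>s n x - s (r i) x\<bar> \<partial>M) < e" using N n by auto
        moreover have "(\<integral>\<^sup>+x. ennreal \<bar>s n x - s (r i) x\<bar> \<partial>M) = ennreal (\<integral>x. \<bar>s n x - s (r i) x\<bar> \<partial>M)"
          using int by (intro nn_abs_eq) auto
        ultimately show "(\<integral>\<^sup>+x. ennreal \<bar>s n x - s (r i) x\<bar> \<partial>M) \<le> ennreal e"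
          by (simp add: ennreal_leI)
      qed
    qed auto
    finally show ?thesis .
  qed
  obtain N1 where N1: "\<forall>i\<ge>N1. \<forall>j\<ge>N1. (\<integral>x. \<bar>s i x - s j x\<bar> \<partial>M) < 1" using cau[of 1] by auto
  have intd: "integrable M (\<lambda>x. s N1 x - f x)"
  proof (rule integrableI_bounded)
    show "(\<integral>\<^sup>+x. ennreal (norm (s N1 x - f x)) \<partial>M) < \<infinity>"
      using bnd[of 1 N1 N1] N1 by (simp add: le_less_trans)
  qed measurable
  have intf: "integrable M f"
  proof -
    have "integrable M (\<lambda>x. s N1 x - (s N1 x - f x))" by (rule Bochner_Integration.integrable_diff[OF int intd])
    then show ?thesis by simp
  qed
  have "(\<lambda>n. \<integral>x. \<bar>s n x - f x\<bar> \<partial>M) \<longlonglongrightarrow> 0"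
  proof (rule LIMSEQ_I)
    fix e :: real assume e: "e > 0"
    obtain N where N: "\<forall>i\<ge>N. \<forall>j\<ge>N. (\<integral>x. \<bar>s i x - s j x\<bar> \<partial>M) < e/2" using cau[of "e/2"] e by auto
    show "\<exists>no. \<forall>n\<ge>no. norm ((\<integral>x. \<bar>s n x - f x\<bar> \<partial>M) - 0) < e"
    proof (intro exI allI impI)
      fix n assume n: "N \<le> n"
      have "ennreal (\<integral>x. \<bar>s n x - f x\<bar> \<partial>M) = (\<integral>\<^sup>+x. ennreal \<bar>s n x - f x\<bar> \<partial>M)"
        using int intf by (intro nn_abs_eq[symmetric]) auto
      also have "\<dots> \<le> ennreal (e/2)" using bnd[of "e/2" N n] N n e by auto
      finally have "(\<integral>x. \<bar>s n x - f x\<bar> \<partial>M) \<le> e/2"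
        using e by (subst (asm) ennreal_le_iff) auto
      moreover have "0 \<le> (\<integral>x. \<bar>s n x - f x\<bar> \<partial>M)" by simp
      ultimately show "norm ((\<integral>x. \<bar>s n x - f x\<bar> \<partial>M) - 0) < e" using e by simp
    qed
  qed
  with intf show ?thesis by blast
qed

lemma ui_tail:
  assumes "unif_integrable M F" "e > 0"
  shows "\<exists>K0. \<forall>K\<ge>K0. \<forall>f\<in>F. (\<integral>\<^sup>+x. ennreal \<bar>f x\<bar> * indicator {y. K < \<bar>f y\<bar>} x \<partial>M) < ennreal e"
proof -
  have "((\<lambda>K::real. \<Squnion>f\<in>F. \<integral>\<^sup>+x. ennreal \<bar>f x\<bar> * indicator {y. K < \<bar>f y\<bar>} x \<partial>M) \<longlongrightarrow> 0) at_top"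
    using assms(1) unfolding unif_integrable_def by blast
  moreover have "(0::ennreal) < ennreal e" using assms(2) by simp
  ultimately have "eventually (\<lambda>K. (\<Squnion>f\<in>F. \<integral>\<^sup>+x. ennreal \<bar>f x\<bar> * indicator {y. K < \<bar>f y\<bar>} x \<partial>M) < ennreal e) at_top"
    by (rule order_tendstoD(2))
  then obtain K0 where K0: "\<And>K. K \<ge> K0 \<Longrightarrow> (\<Squnion>f\<in>F. \<integral>\<^sup>+x. ennreal \<bar>f x\<bar> * indicator {y. K < \<bar>f y\<bar>} x \<partial>M) < ennreal e"
    unfolding eventually_at_top_linorder by blast
  show ?thesis
  proof (intro exI allI impI ballI)
    fix K f assume "K \<ge> K0" "f \<in> F"
    then show "(\<integral>\<^sup>+x. ennreal \<bar>f x\<bar> * indicator {y. K < \<bar>f y\<bar>} x \<partial>M) < ennreal e"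
    proof -
      have "(\<integral>\<^sup>+x. ennreal \<bar>f x\<bar> * indicator {y. K < \<bar>f y\<bar>} x \<partial>M) \<le> (\<Squnion>f\<in>F. \<integral>\<^sup>+x. ennreal \<bar>f x\<bar> * indicator {y. K < \<bar>f y\<bar>} x \<partial>M)"
        using \<open>f \<in> F\<close> by (rule SUP_upper)
      then show ?thesis using K0[OF \<open>K \<ge> K0\<close>] by (rule order.strict_trans1)
    qed
  qed
qed

lemma (in prob_space) ui_bound:
  assumes "unif_integrable M F"
  shows "\<exists>B. \<forall>f\<in>F. integrable M f \<and> (\<integral>x. \<bar>f x\<bar> \<partial>M) \<le> B"
proof -
  obtain K0 where K0: "\<And>K f. K \<ge> K0 \<Longrightarrow> f \<in> F \<Longrightarrow> (\<integral>\<^sup>+x. ennreal \<bar>f x\<bar> * indicator {y. K < \<bar>f y\<bar>} x \<partial>M) < ennreal 1"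
    using ui_tail[OF assms, of 1] by auto
  define K where "K = max K0 0"
  have meas: "f \<in> borel_measurable M" if "f \<in> F" for f
    using assms that unfolding unif_integrable_def by auto
  have nn: "(\<integral>\<^sup>+x. ennreal \<bar>f x\<bar> \<partial>M) \<le> ennreal (1 + K)" if f: "f \<in> F" for f
  proof -
    have "(\<integral>\<^sup>+x. ennreal \<bar>f x\<bar> \<partial>M) \<le> (\<integral>\<^sup>+x. ennreal \<bar>f x\<bar> * indicator {y. K < \<bar>f y\<bar>} x + ennreal K \<partial>M)"
      by (intro nn_integral_mono) (auto simp: indicator_def K_def ennreal_leI)
    also have "\<dots> = (\<integral>\<^sup>+x. ennreal \<bar>f x\<bar> * indicator {y. K < \<bar>f y\<bar>} x \<partial>M) + ennreal K"
      using meas[OF f] by (subst nn_integral_add) (auto simp: emeasure_space_1)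
    also have "\<dots> \<le> ennreal 1 + ennreal K"
      using K0[OF _ f, of K] by (intro add_mono) (auto simp: K_def)
    also have "\<dots> = ennreal (1 + K)" by (simp add: K_def ennreal_plus)
    finally show ?thesis .
  qed
  show ?thesis
  proof (intro exI ballI conjI)
    fix f assume f: "f \<in> F"
    show int: "integrable M f"
      using nn[OF f] meas[OF f] by (intro integrableI_bounded) (auto simp: top.not_eq_extremum intro: le_less_trans)
    have "ennreal (\<integral>x. \<bar>f x\<bar> \<partial>M) = (\<integral>\<^sup>+x. ennreal \<bar>f x\<bar> \<partial>M)"
      using int by (subst nn_integral_eq_integral) auto
    with nn[OF f] have "ennreal (\<integral>x. \<bar>f x\<bar> \<partial>M) \<le> ennreal (1 + K)" by simp
    then show "(\<integral>x. \<bar>f x\<bar> \<partial>M) \<le> 1 + K"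
      by (subst (asm) ennreal_le_iff) (auto simp: K_def)
  qed
qed

locale ui_setting = prob_space M for M :: "'a measure" +
  fixes R :: "'d::finite \<Rightarrow> 'a \<Rightarrow> real" and r :: real and Q :: "('a \<Rightarrow> real) set"
  assumes Rint: "\<And>i. integrable M (R i)"
    and Qd: "Q \<subseteq> densities M"
    and Qconv: "\<And>Z1 Z2 t. Z1 \<in> Q \<Longrightarrow> Z2 \<in> Q \<Longrightarrow> 0 \<le> t \<Longrightarrow> t \<le> 1 \<Longrightarrow>
                  (\<lambda>x. t * Z1 x + (1 - t) * Z2 x) \<in> Q"
    and UI: "unif_integrable M Q"
    and UIR: "\<And>i. unif_integrable M {(\<lambda>x. R i x * Z x) | Z. Z \<in> Q}"
begin

lemma Rmeas[measurable]: "R i \<in> borel_measurable M" using Rint by auto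

lemma Qint: "Z \<in> Q \<Longrightarrow> integrable M Z"
  and Qnn: "Z \<in> Q \<Longrightarrow> AE x in M. 0 \<le> Z x"
  and Qone: "Z \<in> Q \<Longrightarrow> (\<integral>x. Z x \<partial>M) = 1"
  using Qd unfolding densities_def by auto

lemma Qmeas: "Z \<in> Q \<Longrightarrow> Z \<in> borel_measurable M" using Qint by auto

lemma QRbound: "\<exists>B. \<forall>Z\<in>Q. integrable M (\<lambda>x. R i x * Z x) \<and> (\<integral>x. \<bar>R i x * Z x\<bar> \<partial>M) \<le> B"
proof -
  obtain B where B: "\<forall>f\<in>{(\<lambda>x. R i x * Z x) | Z. Z \<in> Q}. integrable M f \<and> (\<integral>x. \<bar>f x\<bar> \<partial>M) \<le> B"
    using ui_bound[OF UIR[of i]] by blast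
  show ?thesis
  proof (intro exI[of _ B] ballI)
    fix Z assume "Z \<in> Q"
    then have mem: "(\<lambda>x. R i x * Z x) \<in> {(\<lambda>x. R i x * Z x) | Z. Z \<in> Q}" by blast
    have "integrable M (\<lambda>x. R i x * Z x) \<and> (\<integral>x. \<bar>(\<lambda>x. R i x * Z x) x\<bar> \<partial>M) \<le> B"
      by (rule bspec[OF B mem])
    then show "integrable M (\<lambda>x. R i x * Z x) \<and> (\<integral>x. \<bar>R i x * Z x\<bar> \<partial>M) \<le> B" by simp
  qed
qed

lemma QRint: "Z \<in> Q \<Longrightarrow> integrable M (\<lambda>x. R i x * Z x)"
  using QRbound[of i] by auto

lemma tau:
  assumes e: "e > 0"
  shows "\<exists>L>0. \<forall>Z\<in>Q. (\<integral>\<^sup>+x. ennreal ((\<bar>R i x\<bar> * indicator {y. L < \<bar>R i y\<bar>} x) * \<bar>Z x\<bar>) \<partial>M) \<le> ennreal e"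
proof -
  obtain K0 where K0: "\<And>K f. K \<ge> K0 \<Longrightarrow> f \<in> {(\<lambda>x. R i x * Z x) | Z. Z \<in> Q} \<Longrightarrow>
      (\<integral>\<^sup>+x. ennreal \<bar>f x\<bar> * indicator {y. K < \<bar>f y\<bar>} x \<partial>M) < ennreal (e/2)"
    using ui_tail[OF UIR[of i], of "e/2"] e by auto
  define K where "K = max K0 0"
  define ER where "ER = (\<integral>x. \<bar>R i x\<bar> \<partial>M)"
  have ER0: "ER \<ge> 0" unfolding ER_def by simp
  define L where "L = 2 * K * (ER + 1) / e + 1"
  have K0': "K \<ge> 0" by (simp add: K_def)
  have "0 \<le> 2 * K * (ER + 1) / e" using e K0' ER0 by (intro divide_nonneg_pos mult_nonneg_nonneg) auto
  then have L: "L > 0" unfolding L_def by linarith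
  have KL: "K / L * ER \<le> e / 2"
  proof -
    have "K * ER \<le> K * (ER + 1)" using K0' by (simp add: mult_left_mono)
    also have "\<dots> \<le> (L - 1) * e / 2" unfolding L_def using e by (simp add: field_simps)
    also have "\<dots> \<le> L * e / 2" using e by (simp add: field_simps)
    finally have "K * ER \<le> L * e / 2" .
    then show ?thesis using L by (simp add: field_simps)
  qed
  show ?thesis
  proof (intro exI conjI ballI)
    show "L > 0" by (rule L)
    fix Z assume Z: "Z \<in> Q"
    note [measurable] = Qmeas[OF Z]
    have f: "(\<lambda>x. R i x * Z x) \<in> {(\<lambda>x. R i x * Z x) | Z. Z \<in> Q}" using Z by blast
    have "(\<integral>\<^sup>+x. ennreal ((\<bar>R i x\<bar> * indicator {y. L < \<bar>R i y\<bar>} x) * \<bar>Z x\<bar>) \<partial>M)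
        \<le> (\<integral>\<^sup>+x. ennreal \<bar>R i x * Z x\<bar> * indicator {y. K < \<bar>R i y * Z y\<bar>} x + ennreal (K / L * \<bar>R i x\<bar>) \<partial>M)"
    proof (intro nn_integral_mono)
      fix x
      show "ennreal ((\<bar>R i x\<bar> * indicator {y. L < \<bar>R i y\<bar>} x) * \<bar>Z x\<bar>)
         \<le> ennreal \<bar>R i x * Z x\<bar> * indicator {y. K < \<bar>R i y * Z y\<bar>} x + ennreal (K / L * \<bar>R i x\<bar>)"
      proof (cases "L < \<bar>R i x\<bar>")
        case False then show ?thesis by simp
      next
        case True
        show ?thesis
        proof (cases "K < \<bar>R i x * Z x\<bar>")
          case True2: True
          then show ?thesis using True by (simp add: abs_mult)
        next
          case False
          have "\<bar>R i x\<bar> * \<bar>Z x\<bar> \<le> K" using False by (simp add: abs_mult)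
          also have "K \<le> K / L * \<bar>R i x\<bar>"
          proof -
            have "K * L \<le> K * \<bar>R i x\<bar>" using True K0' by (intro mult_left_mono) auto
            then show ?thesis using L by (simp add: field_simps)
          qed
          finally have "ennreal (\<bar>R i x\<bar> * \<bar>Z x\<bar>) \<le> ennreal (K / L * \<bar>R i x\<bar>)" by (rule ennreal_leI)
          then show ?thesis using True False by simp
        qed
      qed
    qed
    also have "\<dots> = (\<integral>\<^sup>+x. ennreal \<bar>R i x * Z x\<bar> * indicator {y. K < \<bar>R i y * Z y\<bar>} x \<partial>M)
                    + (\<integral>\<^sup>+x. ennreal (K / L * \<bar>R i x\<bar>) \<partial>M)"
      apply (rule nn_integral_add)
      apply (intro borel_measurable_times_ennreal borel_measurable_indicator'; measurable)
      apply measurable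
      done
    also have "\<dots> \<le> ennreal (e/2) + ennreal (K / L * ER)"
    proof (rule add_mono)
      show "(\<integral>\<^sup>+x. ennreal (K / L * \<bar>R i x\<bar>) \<partial>M) \<le> ennreal (K / L * ER)"
      proof -
        have "0 \<le> K / L" using K0' L by simp
        then have "(\<integral>\<^sup>+x. ennreal (K / L * \<bar>R i x\<bar>) \<partial>M) = ennreal (\<integral>x. K / L * \<bar>R i x\<bar> \<partial>M)"
          using Rint[of i] by (intro nn_integral_eq_integral AE_I2 mult_nonneg_nonneg) auto
        then show ?thesis unfolding ER_def by simp
      qed
      show "(\<integral>\<^sup>+x. ennreal \<bar>R i x * Z x\<bar> * indicator {y. K < \<bar>R i y * Z y\<bar>} x \<partial>M) \<le> ennreal (e/2)"
        using K0[OF _ f, of K] by (auto simp: K_def)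
    qed
    also have "ennreal (e/2) + ennreal (K / L * ER) \<le> ennreal (e/2) + ennreal (e/2)"
      using KL by (intro add_left_mono ennreal_leI)
    also have "\<dots> = ennreal e" using e by (simp flip: ennreal_plus)
    finally show "(\<integral>\<^sup>+x. ennreal ((\<bar>R i x\<bar> * indicator {y. L < \<bar>R i y\<bar>} x) * \<bar>Z x\<bar>) \<partial>M) \<le> ennreal e" .
  qed
qed

end

lemma nn_to_real:
  fixes f :: "'a \<Rightarrow> real"
  assumes "integrable M f" "\<And>x. 0 \<le> f x" "(\<integral>\<^sup>+x. ennreal (f x) \<partial>M) \<le> ennreal c" "0 \<le> c"
  shows "(\<integral>x. f x \<partial>M) \<le> c"
proof -
  have "ennreal (\<integral>x. f x \<partial>M) = (\<integral>\<^sup>+x. ennreal (f x) \<partial>M)"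
    using assms by (intro nn_integral_eq_integral[symmetric]) auto
  with assms(3) have "ennreal (\<integral>x. f x \<partial>M) \<le> ennreal c" by simp
  then show ?thesis using assms(4) by (subst (asm) ennreal_le_iff) auto
qed

context ui_setting
begin

lemma FQ:
  fixes V :: "'a \<Rightarrow> real"
  assumes Zs: "\<And>n. integrable M (Zs n)" and Z: "integrable M Z"
    and conv: "(\<lambda>n. \<integral>x. \<bar>Zs n x - Z x\<bar> \<partial>M) \<longlonglongrightarrow> 0"
    and Vm: "V \<in> borel_measurable M" and V0: "\<And>x. 0 \<le> V x"
    and bnd: "\<And>n. (\<integral>\<^sup>+x. ennreal (V x * \<bar>Zs n x\<bar>) \<partial>M) \<le> c"
  shows "(\<integral>\<^sup>+x. ennreal (V x * \<bar>Z x\<bar>) \<partial>M) \<le> c"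
proof -
  have [measurable]: "\<And>n. Zs n \<in> borel_measurable M" "Z \<in> borel_measurable M" "V \<in> borel_measurable M"
    using Zs Z Vm by auto
  have "\<exists>r::nat\<Rightarrow>nat. strict_mono r \<and> (AE x in M. (\<lambda>n. Zs (r n) x - Z x) \<longlonglongrightarrow> 0)"
    using Zs Z conv by (intro tendsto_L1_AE_subseq) auto
  then obtain r :: "nat \<Rightarrow> nat" where ae: "AE x in M. (\<lambda>n. Zs (r n) x - Z x) \<longlonglongrightarrow> 0" by blast
  show ?thesis
  proof (rule fatou_ae[where u="\<lambda>n x. ennreal (V x * \<bar>Zs (r n) x\<bar>)"])
    show "\<And>n. (\<lambda>x. ennreal (V x * \<bar>Zs (r n) x\<bar>)) \<in> borel_measurable M" by measurable
    show "AE x in M. (\<lambda>n. ennreal (V x * \<bar>Zs (r n) x\<bar>)) \<longlonglongrightarrow> ennreal (V x * \<bar>Z x\<bar>)"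
      using ae
    proof eventually_elim
      case (elim x)
      then have "(\<lambda>n. Zs (r n) x) \<longlonglongrightarrow> Z x" by (simp add: Lim_null[symmetric])
      then show ?case by (intro tendsto_intros)
    qed
    show "\<And>n. (\<integral>\<^sup>+x. ennreal (V x * \<bar>Zs (r n) x\<bar>) \<partial>M) \<le> c" by (rule bnd)
  qed
qed

lemma CONT:
  assumes Zs: "\<And>n. Zs n \<in> Q" and Z: "integrable M Z"
    and conv: "(\<lambda>n. \<integral>x. \<bar>Zs n x - Z x\<bar> \<partial>M) \<longlonglongrightarrow> 0"
  shows "integrable M (\<lambda>x. R i x * Z x)"
    and "(\<lambda>n. \<integral>x. R i x * Zs n x \<partial>M) \<longlonglongrightarrow> (\<integral>x. R i x * Z x \<partial>M)"
proof -
  have Zsi: "\<And>n. integrable M (Zs n)" using Zs Qint by auto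
  have [measurable]: "\<And>n. Zs n \<in> borel_measurable M" "Z \<in> borel_measurable M"
    using Zsi Z by auto
  obtain B where B: "\<And>Z. Z \<in> Q \<Longrightarrow> integrable M (\<lambda>x. R i x * Z x) \<and> (\<integral>x. \<bar>R i x * Z x\<bar> \<partial>M) \<le> B"
    using QRbound[of i] by blast
  have "(\<integral>\<^sup>+x. ennreal (\<bar>R i x\<bar> * \<bar>Z x\<bar>) \<partial>M) \<le> ennreal B"
  proof (rule FQ[OF Zsi Z conv])
    fix n
    have "(\<integral>\<^sup>+x. ennreal (\<bar>R i x\<bar> * \<bar>Zs n x\<bar>) \<partial>M) = (\<integral>\<^sup>+x. ennreal \<bar>R i x * Zs n x\<bar> \<partial>M)"
      by (simp add: abs_mult)
    also have "\<dots> = ennreal (\<integral>x. \<bar>R i x * Zs n x\<bar> \<partial>M)"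
      using B[OF Zs[of n]] by (intro nn_abs_eq) auto
    also have "\<dots> \<le> ennreal B" using B[OF Zs[of n]] by (intro ennreal_leI) auto
    finally show "(\<integral>\<^sup>+x. ennreal (\<bar>R i x\<bar> * \<bar>Zs n x\<bar>) \<partial>M) \<le> ennreal B" .
  qed auto
  then show RZ: "integrable M (\<lambda>x. R i x * Z x)"
    by (intro integrableI_bounded) (auto simp: abs_mult top.not_eq_extremum intro: le_less_trans)
  show "(\<lambda>n. \<integral>x. R i x * Zs n x \<partial>M) \<longlonglongrightarrow> (\<integral>x. R i x * Z x \<partial>M)"
  proof (rule LIMSEQ_I)
    fix e :: real assume e: "e > 0"
    obtain L where L: "L > 0" and Lb: "\<And>Z. Z \<in> Q \<Longrightarrow>
        (\<integral>\<^sup>+x. ennreal ((\<bar>R i x\<bar> * indicator {y. L < \<bar>R i y\<bar>} x) * \<bar>Z x\<bar>) \<partial>M) \<le> ennreal (e/4)"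
      using tau[of "e/4" i] e by auto
    define V where "V x = \<bar>R i x\<bar> * indicator {y. L < \<bar>R i y\<bar>} x" for x
    have Vm[measurable]: "V \<in> borel_measurable M" unfolding V_def by measurable
    have V0: "\<And>x. 0 \<le> V x" unfolding V_def by auto
    have VZs: "\<And>n. integrable M (\<lambda>x. V x * \<bar>Zs n x\<bar>)"
    proof -
      fix n
      show "integrable M (\<lambda>x. V x * \<bar>Zs n x\<bar>)"
        by (rule Bochner_Integration.integrable_bound[OF B[OF Zs[of n], THEN conjunct1]])
           (auto simp: V_def indicator_def abs_mult)
    qed
    have VZ: "integrable M (\<lambda>x. V x * \<bar>Z x\<bar>)"
      by (rule Bochner_Integration.integrable_bound[OF RZ]) (auto simp: V_def indicator_def abs_mult)
    have bZs: "(\<integral>x. V x * \<bar>Zs n x\<bar> \<partial>M) \<le> e/4" for n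
      using Lb[OF Zs[of n]] VZs[of n] V0 e by (intro nn_to_real) (auto simp: V_def)
    have bZ: "(\<integral>x. V x * \<bar>Z x\<bar> \<partial>M) \<le> e/4"
    proof (rule nn_to_real[OF VZ])
      show "(\<integral>\<^sup>+x. ennreal (V x * \<bar>Z x\<bar>) \<partial>M) \<le> ennreal (e/4)"
        by (rule FQ[OF Zsi Z conv Vm V0]) (use Lb[OF Zs] in \<open>simp add: V_def\<close>)
    qed (use V0 e in auto)
    obtain N where N: "\<And>n. n \<ge> N \<Longrightarrow> \<bar>(\<integral>x. \<bar>Zs n x - Z x\<bar> \<partial>M) - 0\<bar> < e / (4 * L)"
      using LIMSEQ_D[OF conv, of "e/(4*L)"] e L by auto
    show "\<exists>no. \<forall>n\<ge>no. norm ((\<integral>x. R i x * Zs n x \<partial>M) - (\<integral>x. R i x * Z x \<partial>M)) < e"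
    proof (intro exI allI impI)
      fix n assume n: "N \<le> n"
      have RZs: "integrable M (\<lambda>x. R i x * Zs n x)" using B[OF Zs[of n]] by auto
      have dZ: "integrable M (\<lambda>x. \<bar>Zs n x - Z x\<bar>)" using Zsi Z by auto
      have "\<bar>(\<integral>x. R i x * Zs n x \<partial>M) - (\<integral>x. R i x * Z x \<partial>M)\<bar> = \<bar>\<integral>x. R i x * Zs n x - R i x * Z x \<partial>M\<bar>"
        using RZs RZ by simp
      also have "\<dots> \<le> (\<integral>x. \<bar>R i x * Zs n x - R i x * Z x\<bar> \<partial>M)"
        by (rule integral_abs_bound)
      also have "\<dots> \<le> (\<integral>x. L * \<bar>Zs n x - Z x\<bar> + V x * \<bar>Zs n x\<bar> + V x * \<bar>Z x\<bar> \<partial>M)"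
      proof (rule integral_mono)
        show "integrable M (\<lambda>x. \<bar>R i x * Zs n x - R i x * Z x\<bar>)" using RZs RZ by auto
        show "integrable M (\<lambda>x. L * \<bar>Zs n x - Z x\<bar> + V x * \<bar>Zs n x\<bar> + V x * \<bar>Z x\<bar>)"
          using dZ VZs[of n] VZ by auto
        fix x
        show "\<bar>R i x * Zs n x - R i x * Z x\<bar> \<le> L * \<bar>Zs n x - Z x\<bar> + V x * \<bar>Zs n x\<bar> + V x * \<bar>Z x\<bar>"
        proof (cases "L < \<bar>R i x\<bar>")
          case True
          have "\<bar>R i x * Zs n x - R i x * Z x\<bar> \<le> \<bar>R i x\<bar> * \<bar>Zs n x\<bar> + \<bar>R i x\<bar> * \<bar>Z x\<bar>"
            by (metis abs_mult abs_triangle_ineq4)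
          moreover have "0 \<le> L * \<bar>Zs n x - Z x\<bar>" using L by simp
          ultimately show ?thesis using True by (simp add: V_def)
        next
          case False
          have "\<bar>R i x * Zs n x - R i x * Z x\<bar> = \<bar>R i x\<bar> * \<bar>Zs n x - Z x\<bar>"
            by (simp add: abs_mult right_diff_distrib[symmetric])
          also have "\<dots> \<le> L * \<bar>Zs n x - Z x\<bar>" using False by (intro mult_right_mono) auto
          finally show ?thesis using False by (simp add: V_def)
        qed
      qed
      also have "\<dots> = L * (\<integral>x. \<bar>Zs n x - Z x\<bar> \<partial>M) + (\<integral>x. V x * \<bar>Zs n x\<bar> \<partial>M) + (\<integral>x. V x * \<bar>Z x\<bar> \<partial>M)"
        using dZ VZs[of n] VZ by simp
      also have "\<dots> < e"
      proof -
        have "(\<integral>x. \<bar>Zs n x - Z x\<bar> \<partial>M) < e / (4 * L)" using N[OF n] by simp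
        then have "L * (\<integral>x. \<bar>Zs n x - Z x\<bar> \<partial>M) < e / 4" using L by (simp add: field_simps)
        then show ?thesis using bZs[of n] bZ e by linarith
      qed
      finally show "norm ((\<integral>x. R i x * Zs n x \<partial>M) - (\<integral>x. R i x * Z x \<partial>M)) < e" by simp
    qed
  qed
qed

end

context ui_setting
begin

definition Tm :: "('a \<Rightarrow> real) \<Rightarrow> real^'d" where
  "Tm Z = (\<chi> i. - (\<integral>x. Z x * (R i x - r) \<partial>M))"

definition Sq :: "('a \<Rightarrow> real) \<Rightarrow> real" where
  "Sq Z = (\<integral>x. sqrt (Z x) \<partial>M)"

lemma ZRr:
  assumes "integrable M Z" "integrable M (\<lambda>x. R i x * Z x)"
  shows "integrable M (\<lambda>x. Z x * (R i x - r))"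
    and "(\<integral>x. Z x * (R i x - r) \<partial>M) = (\<integral>x. R i x * Z x \<partial>M) - r * (\<integral>x. Z x \<partial>M)"
proof -
  have eq: "(\<lambda>x. Z x * (R i x - r)) = (\<lambda>x. R i x * Z x - r * Z x)"
    by (auto simp: algebra_simps)
  show "integrable M (\<lambda>x. Z x * (R i x - r))" unfolding eq using assms by auto
  show "(\<integral>x. Z x * (R i x - r) \<partial>M) = (\<integral>x. R i x * Z x \<partial>M) - r * (\<integral>x. Z x \<partial>M)"
    unfolding eq using assms by simp
qed

lemma QZRr: "Z \<in> Q \<Longrightarrow> integrable M (\<lambda>x. Z x * (R i x - r))"
  using ZRr(1)[OF Qint QRint] by auto

lemma T_tendsto:
  assumes Zs: "\<And>n. Zs n \<in> Q" and Z: "integrable M Z"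
    and conv: "(\<lambda>n. \<integral>x. \<bar>Zs n x - Z x\<bar> \<partial>M) \<longlonglongrightarrow> 0"
  shows "(\<lambda>n. Tm (Zs n)) \<longlonglongrightarrow> Tm Z"
proof (rule vec_tendstoI)
  fix i
  have Zsi: "\<And>n. integrable M (Zs n)" using Zs Qint by auto
  have "(\<lambda>n. (\<integral>x. R i x * Zs n x \<partial>M) - r * (\<integral>x. Zs n x \<partial>M)) \<longlonglongrightarrow>
        (\<integral>x. R i x * Z x \<partial>M) - r * (\<integral>x. Z x \<partial>M)"
    by (intro tendsto_intros CONT(2)[OF Zs Z conv] L1_tendsto_int[OF Zsi Z conv])
  moreover have "(\<integral>x. Zs n x * (R i x - r) \<partial>M) = (\<integral>x. R i x * Zs n x \<partial>M) - r * (\<integral>x. Zs n x \<partial>M)" for n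
    using ZRr(2)[OF Zsi QRint[OF Zs]] .
  moreover have "(\<integral>x. Z x * (R i x - r) \<partial>M) = (\<integral>x. R i x * Z x \<partial>M) - r * (\<integral>x. Z x \<partial>M)"
    using ZRr(2)[OF Z CONT(1)[OF Zs Z conv]] .
  ultimately have "(\<lambda>n. \<integral>x. Zs n x * (R i x - r) \<partial>M) \<longlonglongrightarrow> (\<integral>x. Z x * (R i x - r) \<partial>M)"
    by simp
  then have "(\<lambda>n. - (\<integral>x. Zs n x * (R i x - r) \<partial>M)) \<longlonglongrightarrow> - (\<integral>x. Z x * (R i x - r) \<partial>M)"
    by (rule tendsto_minus)
  then show "(\<lambda>n. Tm (Zs n) $ i) \<longlonglongrightarrow> Tm Z $ i" by (simp add: Tm_def)
qed

lemma T_lin: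
  assumes "Z1 \<in> Q" "Z2 \<in> Q"
  shows "Tm (\<lambda>x. t * Z1 x + (1 - t) * Z2 x) = t *\<^sub>R Tm Z1 + (1 - t) *\<^sub>R Tm Z2"
proof -
  have "(\<integral>x. (t * Z1 x + (1 - t) * Z2 x) * (R i x - r) \<partial>M)
      = t * (\<integral>x. Z1 x * (R i x - r) \<partial>M) + (1 - t) * (\<integral>x. Z2 x * (R i x - r) \<partial>M)" for i
  proof -
    have "(\<lambda>x. (t * Z1 x + (1 - t) * Z2 x) * (R i x - r)) =
          (\<lambda>x. t * (Z1 x * (R i x - r)) + (1 - t) * (Z2 x * (R i x - r)))"
      by (auto simp: algebra_simps)
    then show ?thesis using QZRr[OF assms(1), of i] QZRr[OF assms(2), of i] by simp
  qed
  then show ?thesis by (simp add: Tm_def vec_eq_iff algebra_simps)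
qed

lemma T_convex: "convex (Tm ` Q)"
proof (rule convexI)
  fix x y u v :: real assume uv: "0 \<le> u" "0 \<le> v" "u + v = 1"
  fix a b assume "a \<in> Tm ` Q" "b \<in> Tm ` Q"
  then obtain Z1 Z2 where Z: "Z1 \<in> Q" "Z2 \<in> Q" "a = Tm Z1" "b = Tm Z2" by auto
  have "v = 1 - u" using uv by simp
  then have "u *\<^sub>R a + v *\<^sub>R b = Tm (\<lambda>x. u * Z1 x + (1 - u) * Z2 x)"
    using T_lin[OF Z(1,2)] Z by simp
  moreover have "(\<lambda>x. u * Z1 x + (1 - u) * Z2 x) \<in> Q" using Qconv[OF Z(1,2)] uv by auto
  ultimately show "u *\<^sub>R a + v *\<^sub>R b \<in> Tm ` Q" by auto
qed

lemma T_bounded: "bounded (Tm ` Q)"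
proof -
  have "\<forall>i. \<exists>B. \<forall>Z\<in>Q. integrable M (\<lambda>x. R i x * Z x) \<and> (\<integral>x. \<bar>R i x * Z x\<bar> \<partial>M) \<le> B"
    using QRbound by blast
  then obtain Bf where Bf: "\<And>i Z. Z \<in> Q \<Longrightarrow> (\<integral>x. \<bar>R i x * Z x\<bar> \<partial>M) \<le> Bf i"
    by metis
  have comp: "\<bar>Tm Z $ i\<bar> \<le> Bf i + \<bar>r\<bar>" if Z: "Z \<in> Q" for Z i
  proof -
    have "Tm Z $ i = - ((\<integral>x. R i x * Z x \<partial>M) - r * (\<integral>x. Z x \<partial>M))"
      using ZRr(2)[OF Qint[OF Z] QRint[OF Z]] by (simp add: Tm_def)
    also have "\<dots> = r - (\<integral>x. R i x * Z x \<partial>M)" using Qone[OF Z] by simp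
    finally have "\<bar>Tm Z $ i\<bar> \<le> \<bar>r\<bar> + \<bar>\<integral>x. R i x * Z x \<partial>M\<bar>" by simp
    also have "\<bar>\<integral>x. R i x * Z x \<partial>M\<bar> \<le> (\<integral>x. \<bar>R i x * Z x\<bar> \<partial>M)" by (rule integral_abs_bound)
    finally show ?thesis using Bf[OF Z, of i] by simp
  qed
  show ?thesis unfolding bounded_iff
  proof (intro exI ballI)
    fix y assume "y \<in> Tm ` Q"
    then obtain Z where Z: "Z \<in> Q" "y = Tm Z" by auto
    have "norm y \<le> (\<Sum>i\<in>UNIV. \<bar>y $ i\<bar>)" by (rule norm_le_l1_cart)
    also have "\<dots> \<le> (\<Sum>i\<in>UNIV. Bf i + \<bar>r\<bar>)" using comp[OF Z(1)] Z(2) by (intro sum_mono) auto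
    finally show "norm y \<le> (\<Sum>i\<in>UNIV. Bf i + \<bar>r\<bar>)" .
  qed
qed

lemma sqrt_le_half: "0 \<le> a \<Longrightarrow> sqrt a \<le> (1 + a) / 2"
proof -
  assume a: "0 \<le> a"
  have "0 \<le> (1 - sqrt a)^2" by simp
  also have "(1 - sqrt a)^2 = 1 + a - 2 * sqrt a" using a by (simp add: power2_eq_square algebra_simps)
  finally show ?thesis by simp
qed

lemma sqrt_int:
  assumes "integrable M Z"
  shows "integrable M (\<lambda>x. sqrt (Z x))"
proof (rule Bochner_Integration.integrable_bound)
  show "integrable M (\<lambda>x. 1 + \<bar>Z x\<bar>)" using assms by auto
  show "(\<lambda>x. sqrt (Z x)) \<in> borel_measurable M" using assms by measurable
  show "AE x in M. norm (sqrt (Z x)) \<le> norm (1 + \<bar>Z x\<bar>)"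
  proof (rule AE_I2)
    fix x
    have "sqrt \<bar>Z x\<bar> \<le> (1 + \<bar>Z x\<bar>) / 2" by (rule sqrt_le_half) simp
    moreover have "\<bar>sqrt (Z x)\<bar> = sqrt \<bar>Z x\<bar>" by (cases "Z x \<ge> 0") (auto simp: real_sqrt_minus)
    ultimately show "norm (sqrt (Z x)) \<le> norm (1 + \<bar>Z x\<bar>)" by simp
  qed
qed

lemma Sq_bounds:
  assumes Z: "Z \<in> Q"
  shows "0 \<le> Sq Z" "Sq Z \<le> 1"
proof -
  show "0 \<le> Sq Z" unfolding Sq_def
    using Qnn[OF Z] by (intro integral_nonneg_AE) auto
  have "Sq Z \<le> (\<integral>x. (1 + Z x) / 2 \<partial>M)" unfolding Sq_def
  proof (intro integral_mono_AE)
    show "AE x in M. sqrt (Z x) \<le> (1 + Z x) / 2"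
      using Qnn[OF Z] by eventually_elim (rule sqrt_le_half)
  qed (use sqrt_int[OF Qint[OF Z]] Qint[OF Z] in auto)
  also have "\<dots> = 1" using Qint[OF Z] Qone[OF Z] by (simp add: prob_space)
  finally show "Sq Z \<le> 1" .
qed

end

context ui_setting
begin

lemma UIreal:
  assumes e: "e > 0"
  shows "\<exists>K0. \<forall>a\<ge>K0. \<forall>Z\<in>Q. (\<integral>x. max 0 (Z x - a) \<partial>M) \<le> e"
proof -
  obtain K0 where K0: "\<And>K Z. K \<ge> K0 \<Longrightarrow> Z \<in> Q \<Longrightarrow>
      (\<integral>\<^sup>+x. ennreal \<bar>Z x\<bar> * indicator {y. K < \<bar>Z y\<bar>} x \<partial>M) < ennreal e"
    using ui_tail[OF UI e] by auto
  show ?thesis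
  proof (intro exI[of _ "max K0 0"] allI impI ballI)
    fix a Z assume a: "max K0 0 \<le> a" and Z: "Z \<in> Q"
    have int: "integrable M (\<lambda>x. max 0 (Z x - a))" using Qint[OF Z] by auto
    show "(\<integral>x. max 0 (Z x - a) \<partial>M) \<le> e"
    proof (rule nn_to_real[OF int])
      have "(\<integral>\<^sup>+x. ennreal (max 0 (Z x - a)) \<partial>M) \<le> (\<integral>\<^sup>+x. ennreal \<bar>Z x\<bar> * indicator {y. a < \<bar>Z y\<bar>} x \<partial>M)"
      proof (rule nn_integral_mono)
        fix x
        show "ennreal (max 0 (Z x - a)) \<le> ennreal \<bar>Z x\<bar> * indicator {y. a < \<bar>Z y\<bar>} x"
        proof (cases "a < Z x")
          case True
          then have "a < \<bar>Z x\<bar>" by simp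
          moreover have "max 0 (Z x - a) \<le> \<bar>Z x\<bar>" using a True by auto
          ultimately show ?thesis by (simp add: ennreal_leI)
        qed simp
      qed
      also have "\<dots> \<le> ennreal e" using K0[OF _ Z, of a] a by (auto intro: less_imp_le)
      finally show "(\<integral>\<^sup>+x. ennreal (max 0 (Z x - a)) \<partial>M) \<le> ennreal e" .
    qed (use e in auto)
  qed
qed

lemma CLOS:
  assumes c: "c \<in> closure (Tm ` Q)"
  shows "\<exists>Z Zs. integrable M Z \<and> (\<forall>n. Zs n \<in> Q) \<and>
            (\<lambda>n. \<integral>x. \<bar>Zs n x - Z x\<bar> \<partial>M) \<longlonglongrightarrow> 0 \<and> Tm Z = c"
proof -
  define A where "A e = {Z\<in>Q. dist (Tm Z) c \<le> e}" for e
  define b where "b e = Sup (Sq ` A e)" for e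
  have Ane: "A e \<noteq> {}" if "e > 0" for e
  proof -
    have "\<exists>y\<in>Tm ` Q. dist y c < e" using closure_approachable[THEN iffD1, OF c] that by blast
    then obtain y where yQ: "y \<in> Tm ` Q" and y: "dist y c < e" by (rule bexE)
    from yQ obtain Z where "y = Tm Z" "Z \<in> Q" by (rule imageE)
    then have "Z \<in> A e" using y by (simp add: A_def)
    then show ?thesis by auto
  qed
  have bdd: "bdd_above (Sq ` A e)" for e
    by (rule bdd_aboveI[of _ 1]) (auto simp: A_def Sq_bounds)
  have Sb: "Sq Z \<le> b e" if "Z \<in> A e" for Z e
    unfolding b_def using that bdd by (intro cSup_upper) auto
  have bmono: "b e1 \<le> b e2" if "0 < e1" "e1 \<le> e2" for e1 e2
    unfolding b_def using Ane[OF that(1)] that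
    by (intro cSup_subset_mono bdd) (auto simp: A_def)
  have b01: "0 \<le> b e \<and> b e \<le> 1" if e0: "e > 0" for e
  proof
    obtain Z where Z: "Z \<in> A e" using Ane[OF e0] by auto
    then have "Z \<in> Q" by (simp add: A_def)
    then show "0 \<le> b e" using Sb[OF Z] Sq_bounds by (meson order_trans)
    show "b e \<le> 1" unfolding b_def using Ane[OF e0]
      by (intro cSup_least) (auto simp: A_def Sq_bounds)
  qed
  define d where "d n = inverse (real (Suc n))" for n
  have d0: "d n > 0" for n by (simp add: d_def)
  have dmono: "d m \<le> d n" if "n \<le> m" for n m
    unfolding d_def using that by (simp add: le_imp_inverse_le)
  have "\<exists>Z. Z \<in> A (d n) \<and> b (d n) - d n < Sq Z" for n
  proof -
    have "b (d n) - d n < Sup (Sq ` A (d n))" using d0[of n] by (simp add: b_def)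
    then have "\<exists>s\<in>Sq ` A (d n). b (d n) - d n < s"
      using Ane[OF d0[of n]] by (intro less_cSupD) auto
    then obtain s where sA: "s \<in> Sq ` A (d n)" and s: "b (d n) - d n < s" by (rule bexE)
    from sA obtain Z where "s = Sq Z" "Z \<in> A (d n)" by (rule imageE)
    then show ?thesis using s by auto
  qed
  then obtain Zs where ZsA: "\<And>n. Zs n \<in> A (d n)" and ZsS: "\<And>n. b (d n) - d n < Sq (Zs n)"
    by metis
  have ZsQ: "\<And>n. Zs n \<in> Q" and Zsd: "\<And>n. dist (Tm (Zs n)) c \<le> d n"
    using ZsA by (auto simp: A_def)
  have Zsi: "\<And>n. integrable M (Zs n)" using ZsQ Qint by auto
  have [measurable]: "\<And>n. Zs n \<in> borel_measurable M" using Zsi by auto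
  define bs where "bs n = b (d n)" for n
  have "decseq bs" unfolding bs_def
    by (intro decseq_SucI bmono d0) (simp add: dmono)
  moreover have "Bseq bs" using b01[OF d0] by (intro BseqI'[of _ 1]) (auto simp: bs_def)
  ultimately have "convergent bs"
    by (intro Bseq_monoseq_convergent) (auto simp: monoseq_def decseq_def)
  then have bsC: "Cauchy bs" by (rule convergent_Cauchy)
  have ID: "(\<integral>x. sqrt ((Zs n x + Zs m x) / 2) - (sqrt (Zs n x) + sqrt (Zs m x)) / 2 \<partial>M)
             < (bs n - bs m) / 2 + d n" if nm: "n \<le> m" for n m
  proof -
    define W where "W = (\<lambda>x. (1/2) * Zs n x + (1 - 1/2) * Zs m x)"
    have WQ: "W \<in> Q" unfolding W_def by (rule Qconv[OF ZsQ ZsQ]) auto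
    have TW: "Tm W = (1/2) *\<^sub>R Tm (Zs n) + (1 - 1/2) *\<^sub>R Tm (Zs m)"
      unfolding W_def by (rule T_lin[OF ZsQ ZsQ])
    have "dist (Tm W) c = norm ((1/2) *\<^sub>R (Tm (Zs n) - c) + (1/2) *\<^sub>R (Tm (Zs m) - c))"
      unfolding TW dist_norm by (rule arg_cong[where f=norm]) (simp add: vec_eq_iff field_simps)
    also have "\<dots> \<le> norm ((1/2) *\<^sub>R (Tm (Zs n) - c)) + norm ((1/2) *\<^sub>R (Tm (Zs m) - c))"
      by (rule norm_triangle_ineq)
    also have "\<dots> = dist (Tm (Zs n)) c / 2 + dist (Tm (Zs m)) c / 2"
      by (simp add: dist_norm)
    also have "\<dots> \<le> d n / 2 + d m / 2" using Zsd[of n] Zsd[of m] by simp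
    also have "\<dots> \<le> d n" using dmono[OF nm] by simp
    finally have "W \<in> A (d n)" using WQ by (simp add: A_def)
    then have SW: "Sq W \<le> bs n" unfolding bs_def by (rule Sb)
    have SWeq: "Sq W = (\<integral>x. sqrt ((Zs n x + Zs m x) / 2) \<partial>M)"
    proof -
      have "(\<lambda>x. sqrt (1 / 2 * Zs n x + (1 - 1 / 2) * Zs m x)) = (\<lambda>x. sqrt ((Zs n x + Zs m x) / 2))"
        by (rule ext) (simp add: field_simps)
      then show ?thesis unfolding Sq_def W_def by simp
    qed
    have i1: "integrable M (\<lambda>x. sqrt ((Zs n x + Zs m x) / 2))"
      using Zsi by (intro sqrt_int) auto
    have i2: "integrable M (\<lambda>x. sqrt (Zs n x))" "integrable M (\<lambda>x. sqrt (Zs m x))"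
      using Zsi by (auto intro: sqrt_int)
    have "(\<integral>x. sqrt ((Zs n x + Zs m x) / 2) - (sqrt (Zs n x) + sqrt (Zs m x)) / 2 \<partial>M)
        = Sq W - (Sq (Zs n) + Sq (Zs m)) / 2"
      unfolding SWeq using i1 i2 by (simp add: Sq_def)
    also have "\<dots> < bs n - ((bs n - d n) + (bs m - d m)) / 2"
      using SW ZsS[of n] ZsS[of m] unfolding bs_def by argo
    also have "\<dots> \<le> (bs n - bs m) / 2 + d n" using dmono[OF nm] by argo
    finally show ?thesis .
  qed
  have cau: "\<exists>N. \<forall>i\<ge>N. \<forall>j\<ge>N. (\<integral>x. \<bar>Zs i x - Zs j x\<bar> \<partial>M) < \<epsilon>" if eps: "\<epsilon> > 0" for \<epsilon>
  proof -
    define e where "e = \<epsilon> / 7"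
    have e: "e > 0" using eps by (simp add: e_def)
    obtain K0 where K0: "\<And>a Z. a \<ge> K0 \<Longrightarrow> Z \<in> Q \<Longrightarrow> (\<integral>x. max 0 (Z x - a) \<partial>M) \<le> e"
      using UIreal[OF e] by blast
    define k where "k = 2 * \<bar>K0\<bar> + 1"
    have k1: "k \<ge> 1" by (simp add: k_def)
    have kK: "k^2 / 2 \<ge> K0"
    proof -
      have "k \<le> k^2" using k1 by (simp add: power2_eq_square)
      moreover have "k \<ge> 2 * K0 + 1" unfolding k_def by simp
      ultimately show ?thesis by argo
    qed
    define t where "t = 4 * k^3 / e + 1"
    have t0: "t > 0" unfolding t_def using e k1 by (simp add: add_pos_nonneg)
    have kt: "4 * k^3 / t < e"
    proof -
      have "4 * k^3 / e < t" by (simp add: t_def)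
      then have "4 * k^3 < t * e" using e by (simp add: divide_less_eq)
      then show ?thesis using t0 by (simp add: divide_less_eq mult.commute)
    qed
    define \<delta> where "\<delta> = e / (6 * t)"
    have \<delta>0: "\<delta> > 0" using e t0 by (simp add: \<delta>_def)
    obtain N1 where N1: "\<And>m n. m \<ge> N1 \<Longrightarrow> n \<ge> N1 \<Longrightarrow> dist (bs m) (bs n) < \<delta>"
      using bsC[unfolded Cauchy_def, rule_format, OF \<delta>0] by metis
    obtain N2 where N2: "inverse (real (Suc N2)) < \<delta>" using reals_Archimedean[OF \<delta>0] by auto
    define N where "N = max N1 N2"
    have main: "(\<integral>x. \<bar>Zs n x - Zs m x\<bar> \<partial>M) < \<epsilon>" if nm: "N \<le> n" "n \<le> m" for n m
    proof -
      define D where "D x = sqrt ((Zs n x + Zs m x) / 2) - (sqrt (Zs n x) + sqrt (Zs m x)) / 2" for x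
      have iD: "integrable M D" unfolding D_def using Zsi
        by (intro Bochner_Integration.integrable_diff Bochner_Integration.integrable_divide
            Bochner_Integration.integrable_add sqrt_int) auto
      have imax: "integrable M (\<lambda>x. max 0 (Zs j x - k^2/2))" for j using Zsi by auto
      have "(\<integral>x. \<bar>Zs n x - Zs m x\<bar> \<partial>M) \<le>
            (\<integral>x. 3*t*D x + 4*k^3/t + 2*max 0 (Zs n x - k^2/2) + 2*max 0 (Zs m x - k^2/2) \<partial>M)"
      proof (rule integral_mono_AE)
        show "integrable M (\<lambda>x. \<bar>Zs n x - Zs m x\<bar>)" using Zsi by auto
        show "integrable M (\<lambda>x. 3*t*D x + 4*k^3/t + 2*max 0 (Zs n x - k^2/2) + 2*max 0 (Zs m x - k^2/2))"
          using iD imax by auto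
        show "AE x in M. \<bar>Zs n x - Zs m x\<bar> \<le> 3*t*D x + 4*k^3/t + 2*max 0 (Zs n x - k^2/2) + 2*max 0 (Zs m x - k^2/2)"
          using Qnn[OF ZsQ[of n]] Qnn[OF ZsQ[of m]]
        proof eventually_elim
          case (elim x)
          show ?case unfolding D_def
            by (rule sqrt_ineq[OF elim(1) elim(2) _ t0]) (use k1 in simp)
        qed
      qed
      also have "\<dots> = 3*t*(\<integral>x. D x \<partial>M) + 4*k^3/t + 2*(\<integral>x. max 0 (Zs n x - k^2/2) \<partial>M)
                      + 2*(\<integral>x. max 0 (Zs m x - k^2/2) \<partial>M)"
        using iD imax by (simp add: prob_space)
      also have "\<dots> < \<epsilon>"
      proof -
        have "(\<integral>x. D x \<partial>M) < (bs n - bs m) / 2 + d n" unfolding D_def by (rule ID[OF nm(2)])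
        moreover have "\<bar>bs n - bs m\<bar> < \<delta>" using N1[of n m] nm by (simp add: N_def dist_real_def)
        moreover have "d n < \<delta>"
        proof -
          have "d n \<le> d N2" using nm by (intro dmono) (simp add: N_def)
          moreover have "d N2 < \<delta>" using N2 by (simp add: d_def)
          ultimately show ?thesis by linarith
        qed
        ultimately have "(\<integral>x. D x \<partial>M) < 3/2 * \<delta>" by argo
        moreover have "3/2 * \<delta> = e / (4 * t)" unfolding \<delta>_def using t0 by (simp add: field_simps)
        ultimately have IDd: "(\<integral>x. D x \<partial>M) < e / (4 * t)" by simp
        have "3*t*(\<integral>x. D x \<partial>M) < 3*t*(e / (4 * t))" by (rule mult_strict_left_mono[OF IDd]) (use t0 in simp)
        also have "3*t*(e / (4 * t)) = 3/4 * e" using t0 by (simp add: field_simps)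
        finally have p1: "3*t*(\<integral>x. D x \<partial>M) < 3/4 * e" .
        have p2: "(\<integral>x. max 0 (Zs n x - k^2/2) \<partial>M) \<le> e" "(\<integral>x. max 0 (Zs m x - k^2/2) \<partial>M) \<le> e"
          using K0[OF kK ZsQ] by auto
        have fin: "0 < ee \<Longrightarrow> A < 3/4*ee \<Longrightarrow> B < ee \<Longrightarrow> C \<le> ee \<Longrightarrow> D' \<le> ee \<Longrightarrow> eps = 7*ee \<Longrightarrow> A + B + 2*C + 2*D' < eps"
          for A B C D' ee eps :: real by argo
        show ?thesis by (rule fin[OF e p1 kt p2]) (simp add: e_def)
      qed
      finally show ?thesis .
    qed
    show ?thesis
    proof (intro exI[of _ N] allI impI)
      fix i j assume ij: "N \<le> i" "N \<le> j"
      show "(\<integral>x. \<bar>Zs i x - Zs j x\<bar> \<partial>M) < \<epsilon>"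
      proof (cases "i \<le> j")
        case True then show ?thesis using main ij by auto
      next
        case False
        then have "(\<integral>x. \<bar>Zs j x - Zs i x\<bar> \<partial>M) < \<epsilon>" using main ij by auto
        then show ?thesis by (simp add: abs_minus_commute)
      qed
    qed
  qed
  have "\<exists>f. integrable M f \<and> (\<lambda>n. \<integral>x. \<bar>Zs n x - f x\<bar> \<partial>M) \<longlonglongrightarrow> 0"
    by (rule L1_complete[OF Zsi]) (rule cau)
  then obtain Z where Z: "integrable M Z" and conv: "(\<lambda>n. \<integral>x. \<bar>Zs n x - Z x\<bar> \<partial>M) \<longlonglongrightarrow> 0"
    by auto
  have "(\<lambda>n. Tm (Zs n)) \<longlonglongrightarrow> Tm Z" by (rule T_tendsto[OF ZsQ Z conv])
  moreover have "(\<lambda>n. Tm (Zs n)) \<longlonglongrightarrow> c"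
  proof -
    have "(\<lambda>n. dist (Tm (Zs n)) c) \<longlonglongrightarrow> 0"
    proof (rule tendsto_sandwich[of "\<lambda>_. 0" _ _ d])
      show "(\<lambda>n. d n) \<longlonglongrightarrow> 0" unfolding d_def by (rule LIMSEQ_inverse_real_of_nat)
    qed (use Zsd in auto)
    then show ?thesis by (rule tendsto_dist_iff[THEN iffD2])
  qed
  ultimately have "Tm Z = c" by (rule LIMSEQ_unique)
  then show ?thesis using Z ZsQ conv by (intro exI[of _ Z] exI[of _ Zs]) simp
qed

end

lemma NE:
  fixes Z X :: "'a \<Rightarrow> real"
  assumes Zm[measurable]: "Z \<in> borel_measurable M" and Xm[measurable]: "X \<in> borel_measurable M"
    and nn: "AE x in M. 0 \<le> Z x" and int: "integrable M (\<lambda>x. Z x * X x)"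
  shows "neg_expect M Z X = ereal (- (\<integral>x. Z x * X x \<partial>M))"
proof -
  have i1: "integrable M (\<lambda>x. Z x * max 0 (- X x))"
    by (rule Bochner_Integration.integrable_bound[OF int]) (auto simp: abs_mult intro!: AE_I2 mult_left_mono)
  have i2: "integrable M (\<lambda>x. Z x * max 0 (X x))"
    by (rule Bochner_Integration.integrable_bound[OF int]) (auto simp: abs_mult intro!: AE_I2 mult_left_mono)
  have nn1: "AE x in M. 0 \<le> Z x * max 0 (- X x)" using nn by eventually_elim simp
  have nn2: "AE x in M. 0 \<le> Z x * max 0 (X x)" using nn by eventually_elim simp
  have a: "(\<integral>\<^sup>+x. ennreal (Z x * max 0 (- X x)) \<partial>M) = ennreal (\<integral>x. Z x * max 0 (- X x) \<partial>M)"
    by (rule nn_integral_eq_integral[OF i1 nn1])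
  have b: "(\<integral>\<^sup>+x. ennreal (Z x * max 0 (X x)) \<partial>M) = ennreal (\<integral>x. Z x * max 0 (X x) \<partial>M)"
    by (rule nn_integral_eq_integral[OF i2 nn2])
  have p1: "0 \<le> (\<integral>x. Z x * max 0 (- X x) \<partial>M)" by (rule integral_nonneg_AE[OF nn1])
  have p2: "0 \<le> (\<integral>x. Z x * max 0 (X x) \<partial>M)" by (rule integral_nonneg_AE[OF nn2])
  have eq: "(\<integral>x. Z x * max 0 (- X x) \<partial>M) - (\<integral>x. Z x * max 0 (X x) \<partial>M) = - (\<integral>x. Z x * X x \<partial>M)"
  proof -
    have "(\<integral>x. Z x * max 0 (- X x) \<partial>M) - (\<integral>x. Z x * max 0 (X x) \<partial>M)
        = (\<integral>x. Z x * max 0 (- X x) - Z x * max 0 (X x) \<partial>M)"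
      using i1 i2 by simp
    also have "\<dots> = (\<integral>x. - (Z x * X x) \<partial>M)"
      by (rule Bochner_Integration.integral_cong) (auto simp: max_def algebra_simps)
    finally show ?thesis by simp
  qed
  show ?thesis
    unfolding neg_expect_def Let_def a b using p1 p2 eq by simp
qed

theorem proposition4p5:
  fixes M :: "'a measure" and r :: real
    and S0 :: "real^'d" and S1 :: "'d \<Rightarrow> 'a \<Rightarrow> real"
    and R :: "'d \<Rightarrow> 'a \<Rightarrow> real" and Q :: "('a \<Rightarrow> real) set"
  assumes "prob_space M"
    and "r > -1"
    and "\<forall>i. S0 $ i > 0"
    and "\<forall>i. S1 i \<in> borel_measurable M"
    and R_def: "\<forall>i x. R i x = (S1 i x - S0 $ i) / S0 $ i"
    and nonredundant: "\<forall>(\<theta>0::real) (\<theta>::real^'d).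
          (\<theta>0 + (\<Sum>i\<in>UNIV. \<theta> $ i * S0 $ i) = 0 \<and>
           (AE x in M. \<theta>0 * (1 + r) + (\<Sum>i\<in>UNIV. \<theta> $ i * S1 i x) = 0))
          \<longrightarrow> \<theta>0 = 0 \<and> \<theta> = 0"
    and "\<forall>i. integrable M (R i)"
    and "\<exists>i. integral\<^sup>L M (R i) \<noteq> r"
    and "Q \<subseteq> densities M"
    and "\<forall>Z1\<in>Q. \<forall>Z2\<in>Q. \<forall>t::real. 0 \<le> t \<and> t \<le> 1 \<longrightarrow>
           (\<lambda>x. t * Z1 x + (1 - t) * Z2 x) \<in> Q"
    and "(\<lambda>_. 1) \<in> Q"
    and UI: "unif_integrable M Q"
    and UI_R: "\<forall>i. unif_integrable M {(\<lambda>x. R i x * Z x) | Z. Z \<in> Q}"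
  shows "convex (C_set M R r (L1_closure M Q)) \<and> compact (C_set M R r (L1_closure M Q)) \<and>
         (\<forall>\<pi>::real^'d. \<exists>c\<in>C_set M R r (L1_closure M Q).
             (\<forall>c'\<in>C_set M R r (L1_closure M Q). \<pi> \<bullet> c' \<le> \<pi> \<bullet> c) \<and>
             rho M Q (excess_return R r \<pi>) = ereal (\<pi> \<bullet> c))"
proof -
  have ax: "ui_setting_axioms M R Q"
  proof (rule ui_setting_axioms.intro)
    show "\<And>i. integrable M (R i)" using assms(7) by blast
    show "Q \<subseteq> densities M" by (rule assms(9))
    show "\<And>Z1 Z2 t. Z1 \<in> Q \<Longrightarrow> Z2 \<in> Q \<Longrightarrow> 0 \<le> t \<Longrightarrow> t \<le> 1 \<Longrightarrow> (\<lambda>x. t * Z1 x + (1 - t) * Z2 x) \<in> Q"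
      using assms(10) by blast
    show "unif_integrable M Q" by (rule UI)
    show "\<And>i. unif_integrable M {(\<lambda>x. R i x * Z x) | Z. Z \<in> Q}" using UI_R by blast
  qed
  interpret ui_setting M R r Q by (rule ui_setting.intro[OF assms(1) ax])
  define Qb where "Qb = L1_closure M Q"
  have Qb_seq: "\<exists>Zs. (\<forall>n. Zs n \<in> Q) \<and> (\<lambda>n. \<integral>x. \<bar>Zs n x - Z x\<bar> \<partial>M) \<longlonglongrightarrow> 0"
    and Qb_int: "integrable M Z" if Z: "Z \<in> Qb" for Z
  proof -
    show Zi: "integrable M Z" using Z by (simp add: Qb_def L1_closure_def)
    obtain Zs where Zs: "\<And>n. Zs n \<in> Q" and c: "(\<lambda>n. \<integral>\<^sup>+x. ennreal \<bar>Zs n x - Z x\<bar> \<partial>M) \<longlonglongrightarrow> 0"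
      using Z by (auto simp: Qb_def L1_closure_def)
    have "(\<lambda>n. \<integral>x. \<bar>Zs n x - Z x\<bar> \<partial>M) \<longlonglongrightarrow> 0"
      using L1conv[of M Zs Z] Zs Qint Zi c by auto
    with Zs show "\<exists>Zs. (\<forall>n. Zs n \<in> Q) \<and> (\<lambda>n. \<integral>x. \<bar>Zs n x - Z x\<bar> \<partial>M) \<longlonglongrightarrow> 0" by auto
  qed
  have Qb_nn: "AE x in M. 0 \<le> Z x" if Z: "Z \<in> Qb" for Z
  proof -
    obtain Zs where Zs: "\<And>n. Zs n \<in> Q" and conv: "(\<lambda>n. \<integral>x. \<bar>Zs n x - Z x\<bar> \<partial>M) \<longlonglongrightarrow> 0"
      using Qb_seq[OF Z] by auto
    have Zi: "integrable M Z" by (rule Qb_int[OF Z])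
    have im: "integrable M (\<lambda>x. max 0 (- Z x))" using Zi by auto
    have le: "(\<integral>x. max 0 (- Z x) \<partial>M) \<le> (\<integral>x. \<bar>Zs n x - Z x\<bar> \<partial>M)" for n
    proof (rule integral_mono_AE[OF im])
      show "integrable M (\<lambda>x. \<bar>Zs n x - Z x\<bar>)" using Zi Qint[OF Zs[of n]] by auto
      show "AE x in M. max 0 (- Z x) \<le> \<bar>Zs n x - Z x\<bar>"
        using Qnn[OF Zs[of n]] by eventually_elim auto
    qed
    have "(\<integral>x. max 0 (- Z x) \<partial>M) \<le> 0"
      using conv le by (intro LIMSEQ_le_const) auto
    moreover have "0 \<le> (\<integral>x. max 0 (- Z x) \<partial>M)" by simp
    ultimately have "(\<integral>x. max 0 (- Z x) \<partial>M) = 0" by simp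
    then have "AE x in M. max 0 (- Z x) = 0"
      using integral_nonneg_eq_0_iff_AE[OF im] by simp
    then show ?thesis by eventually_elim (auto simp: max_def split: if_splits)
  qed
  have Qb_R: "integrable M (\<lambda>x. R i x * Z x)" if Z: "Z \<in> Qb" for Z i
  proof -
    obtain Zs where Zs: "\<And>n. Zs n \<in> Q" and conv: "(\<lambda>n. \<integral>x. \<bar>Zs n x - Z x\<bar> \<partial>M) \<longlonglongrightarrow> 0"
      using Qb_seq[OF Z] by auto
    show ?thesis by (rule CONT(1)[OF Zs Qb_int[OF Z] conv])
  qed
  have Cset: "C_set M R r Qb = Tm ` Qb"
  proof -
    have ne: "neg_expect M Z (\<lambda>x. R i x - r) = ereal (Tm Z $ i)" if Z: "Z \<in> Qb" for Z i
    proof -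
      have Zi: "integrable M Z" by (rule Qb_int[OF Z])
      have "neg_expect M Z (\<lambda>x. R i x - r) = ereal (- (\<integral>x. Z x * (R i x - r) \<partial>M))"
        using Zi Qb_nn[OF Z] ZRr(1)[OF Zi Qb_R[OF Z]] by (intro NE) auto
      then show ?thesis by (simp add: Tm_def)
    qed
    show ?thesis
    proof (intro set_eqI iffI)
      fix c assume "c \<in> C_set M R r Qb"
      then obtain Z where Z: "Z \<in> Qb" and h: "\<forall>i. ereal (c $ i) = neg_expect M Z (\<lambda>x. R i x - r)"
        unfolding C_set_def by auto
      have "c = Tm Z" using h ne[OF Z] by (simp add: vec_eq_iff)
      then show "c \<in> Tm ` Qb" using Z by auto
    next
      fix c assume "c \<in> Tm ` Qb"
      then obtain Z where Z: "Z \<in> Qb" and cZ: "c = Tm Z" by auto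
      show "c \<in> C_set M R r Qb" unfolding C_set_def mem_Collect_eq
      proof (rule bexI[OF _ Z])
        show "\<forall>i. ereal (c $ i) = neg_expect M Z (\<lambda>x. R i x - r)" using ne[OF Z] cZ by simp
      qed
    qed
  qed
  have Tclos: "Tm ` Qb = closure (Tm ` Q)"
  proof (intro set_eqI iffI)
    fix c assume "c \<in> Tm ` Qb"
    then obtain Z where Z: "Z \<in> Qb" and cZ: "c = Tm Z" by auto
    obtain Zs where Zs: "\<And>n. Zs n \<in> Q" and conv: "(\<lambda>n. \<integral>x. \<bar>Zs n x - Z x\<bar> \<partial>M) \<longlonglongrightarrow> 0"
      using Qb_seq[OF Z] by auto
    have "(\<lambda>n. Tm (Zs n)) \<longlonglongrightarrow> Tm Z" by (rule T_tendsto[OF Zs Qb_int[OF Z] conv])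
    moreover have "\<forall>n. Tm (Zs n) \<in> Tm ` Q" using Zs by auto
    ultimately show "c \<in> closure (Tm ` Q)" unfolding cZ closure_sequential
      by (intro exI[of _ "\<lambda>n. Tm (Zs n)"] conjI)
  next
    fix c assume cc: "c \<in> closure (Tm ` Q)"
    obtain Z Zs where Z: "integrable M Z" and Zs: "\<forall>n. Zs n \<in> Q"
      and conv: "(\<lambda>n. \<integral>x. \<bar>Zs n x - Z x\<bar> \<partial>M) \<longlonglongrightarrow> 0" and cZ: "Tm Z = c"
      using CLOS[OF cc] by auto
    have "(\<lambda>n. \<integral>\<^sup>+x. ennreal \<bar>Zs n x - Z x\<bar> \<partial>M) \<longlonglongrightarrow> 0"
      using L1conv[of M Zs Z] Zs Qint Z conv by auto
    then have "Z \<in> Qb" unfolding Qb_def L1_closure_def using Z Zs by auto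
    then show "c \<in> Tm ` Qb" using cZ by auto
  qed
  have C_eq: "C_set M R r (L1_closure M Q) = closure (Tm ` Q)"
    using Cset Tclos by (simp add: Qb_def)
  have conv: "convex (closure (Tm ` Q))" by (rule convex_closure[OF T_convex])
  have comp: "compact (closure (Tm ` Q))"
    unfolding compact_eq_bounded_closed using T_bounded by auto
  have ne: "closure (Tm ` Q) \<noteq> {}"
  proof -
    have "Tm (\<lambda>_. 1) \<in> Tm ` Q" using assms(11) by (rule imageI)
    then have "Tm (\<lambda>_. 1) \<in> closure (Tm ` Q)" by (rule closure_subset[THEN subsetD])
    then show ?thesis by auto
  qed
  have main: "\<exists>c\<in>closure (Tm ` Q). (\<forall>c'\<in>closure (Tm ` Q). \<pi> \<bullet> c' \<le> \<pi> \<bullet> c) \<and>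
             rho M Q (excess_return R r \<pi>) = ereal (\<pi> \<bullet> c)" for \<pi> :: "real^'d"
  proof -
    have "continuous_on (closure (Tm ` Q)) (\<lambda>c. \<pi> \<bullet> c)" by (intro continuous_intros)
    then obtain c where c: "c \<in> closure (Tm ` Q)" and cmax: "\<forall>c'\<in>closure (Tm ` Q). \<pi> \<bullet> c' \<le> \<pi> \<bullet> c"
      using continuous_attains_sup[OF comp ne] by metis
    have neZ: "neg_expect M Z (excess_return R r \<pi>) = ereal (\<pi> \<bullet> Tm Z)" if Z: "Z \<in> Q" for Z
    proof -
      have eqf: "(\<lambda>x. Z x * excess_return R r \<pi> x) = (\<lambda>x. \<Sum>i\<in>UNIV. \<pi> $ i * (Z x * (R i x - r)))"
        by (auto simp: excess_return_def sum_distrib_left algebra_simps)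
      have int: "integrable M (\<lambda>x. Z x * excess_return R r \<pi> x)"
        unfolding eqf using QZRr[OF Z] by auto
      have "(\<integral>x. Z x * excess_return R r \<pi> x \<partial>M) = (\<Sum>i\<in>UNIV. \<pi> $ i * (\<integral>x. Z x * (R i x - r) \<partial>M))"
        unfolding eqf using QZRr[OF Z] by (simp add: Bochner_Integration.integral_sum)
      also have "\<dots> = - (\<pi> \<bullet> Tm Z)"
        by (simp add: Tm_def inner_vec_def sum_negf)
      finally have "(\<integral>x. Z x * excess_return R r \<pi> x \<partial>M) = - (\<pi> \<bullet> Tm Z)" .
      moreover have "neg_expect M Z (excess_return R r \<pi>) = ereal (- (\<integral>x. Z x * excess_return R r \<pi> x \<partial>M))"
        using Qmeas[OF Z] Qnn[OF Z] int by (intro NE) (auto simp: excess_return_def)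
      ultimately show ?thesis by simp
    qed
    have rho_eq: "rho M Q (excess_return R r \<pi>) = (\<Squnion>Z\<in>Q. ereal (\<pi> \<bullet> Tm Z))"
      unfolding rho_def using neZ by (intro SUP_cong) auto
    have "(\<Squnion>Z\<in>Q. ereal (\<pi> \<bullet> Tm Z)) = ereal (\<pi> \<bullet> c)"
    proof (rule antisym)
      show "(\<Squnion>Z\<in>Q. ereal (\<pi> \<bullet> Tm Z)) \<le> ereal (\<pi> \<bullet> c)"
      proof (rule SUP_least)
        fix Z assume "Z \<in> Q"
        then have "Tm Z \<in> Tm ` Q" by (rule imageI)
        then have "Tm Z \<in> closure (Tm ` Q)" by (rule closure_subset[THEN subsetD])
        then show "ereal (\<pi> \<bullet> Tm Z) \<le> ereal (\<pi> \<bullet> c)" using cmax by auto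
      qed
      obtain y where y: "\<forall>n. y n \<in> Tm ` Q" and ylim: "y \<longlonglongrightarrow> c"
        using c unfolding closure_sequential by blast
      have lim: "(\<lambda>n. ereal (\<pi> \<bullet> y n)) \<longlonglongrightarrow> ereal (\<pi> \<bullet> c)"
        by (intro tendsto_intros ylim)
      have bnd: "\<forall>n. ereal (\<pi> \<bullet> y n) \<le> (\<Squnion>Z\<in>Q. ereal (\<pi> \<bullet> Tm Z))"
      proof
        fix n
        obtain Z where "Z \<in> Q" "y n = Tm Z" using y by auto
        then show "ereal (\<pi> \<bullet> y n) \<le> (\<Squnion>Z\<in>Q. ereal (\<pi> \<bullet> Tm Z))" by (auto intro: SUP_upper)
      qed
      show "ereal (\<pi> \<bullet> c) \<le> (\<Squnion>Z\<in>Q. ereal (\<pi> \<bullet> Tm Z))"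
        by (rule LIMSEQ_le_const2[OF lim]) (use bnd in blast)
    qed
    with c cmax rho_eq show ?thesis by auto
  qed
  show ?thesis unfolding C_eq using conv comp main by blast
qed

end
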